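(* For any $\tau_f\in(\tau_1^i,\tau_2^i)$ there exists a unique $\tau_{pr}=\tau_{pr}(\tau_f)\in(1,\tau_f)$ such that, with $\tau_b=\tau_{pr}(\tau_f)$, $$p'(\tau_b)<\frac{2h(\tau_b)-2h(\tau_f)}{\tau_b^2-\tau_f^2}=p'(\tau_f)$$ and Liu's extended entropy condition $\frac{2h(\tau_f)-2h(\tau_b)}{\tau_f^2-\tau_b^2}<\frac{2h(\tau_f)-2h(\tau)}{\tau_f^2-\tau^2}$ for all $\tau\in(\tau_b,\tau_f)$ hold. Moreover, $\frac{d\tau_{pr}}{d\tau_f}<0$ for $\tau_f\in(\tau_1^i,\tau_2^i)$.
   Context: The pressure is $p(\tau)=\frac{\mathcal S}{(\tau-1)^\gamma}-\frac{1}{\tau^2}$ for $\tau>1$, with constants $1<\gamma<2$, $\mathcal S>0$, assumed such that there exist $1<\tau_1^i<\tau_2^i$ with $p'<0$ on $(1,\infty)$, $p''>0$ on $(1,\tau_1^i)\cup(\tau_2^i,\infty)$, $p''<0$ on $(\tau_1^i,\tau_2^i)$. The function $h$ satisfies $h'(\tau)=\tau p'(\tau)$. *)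

theory Defs
  imports "HOL-Analysis.Analysis"
begin

definition pres :: "real \<Rightarrow> real \<Rightarrow> real \<Rightarrow> real" where
  "pres S \<gamma> \<tau> = S / (\<tau> - 1) powr \<gamma> - 1 / \<tau>^2"

definition chord :: "(real \<Rightarrow> real) \<Rightarrow> real \<Rightarrow> real \<Rightarrow> real" where
  "chord h a b = (2 * h a - 2 * h b) / (a^2 - b^2)"

definition pr_cond :: "(real \<Rightarrow> real) \<Rightarrow> (real \<Rightarrow> real) \<Rightarrow> real \<Rightarrow> real \<Rightarrow> bool" where
  "pr_cond p h \<tau>f \<tau>b \<longleftrightarrow>
     deriv p \<tau>b < chord h \<tau>b \<tau>f \<and> chord h \<tau>b \<tau>f = deriv p \<tau>f \<and>
     (\<forall>\<tau>\<in>{\<tau>b<..<\<tau>f}. chord h \<tau>f \<tau>b < chord h \<tau>f \<tau>)"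

end

theory Submission
  imports Defs
begin

definition pd1 :: "real \<Rightarrow> real \<Rightarrow> real \<Rightarrow> real" where
  "pd1 S g t = - g * S * (t - 1) powr (- g - 1) + 2 / t^3"
definition pd2 :: "real \<Rightarrow> real \<Rightarrow> real \<Rightarrow> real" where
  "pd2 S g t = g * (g + 1) * S * (t - 1) powr (- g - 2) - 6 / t^4"

lemma powr_sh: assumes "1 < t"
  shows "((\<lambda>x. (x - 1) powr a) has_real_derivative a * (t - 1) powr (a - 1)) (at t)"
  using DERIV_fun_powr[of "\<lambda>x. x - 1" 1 t a] assms
  by (auto intro!: derivative_eq_intros)

lemma pres_alt: "pres S g = (\<lambda>x. S * (x - 1) powr (-g) - 1 / x^2)"
  by (auto simp: pres_def[abs_def] powr_minus divide_inverse)

lemma pres_deriv: assumes "1 < t" shows "(pres S g has_real_derivative pd1 S g t) (at t)"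
  unfolding pres_alt pd1_def
  using assms
  by (auto intro!: derivative_eq_intros powr_sh simp: power2_eq_square power3_eq_cube field_simps)

lemma pd1_deriv: assumes "1 < t" shows "(pd1 S g has_real_derivative pd2 S g t) (at t)"
  unfolding pd1_def[abs_def] pd2_def
  using assms
  by (auto intro!: derivative_eq_intros powr_sh simp: eval_nat_numeral field_simps)

lemma deriv_pres: "1 < t \<Longrightarrow> deriv (pres S g) t = pd1 S g t"
  using pres_deriv DERIV_imp_deriv by blast

lemma deriv2_pres: assumes "1 < t" shows "deriv (deriv (pres S g)) t = pd2 S g t"
proof -
  have "(deriv (pres S g) has_real_derivative pd2 S g t) (at t)"
    by (rule has_field_derivative_transform_within_open[OF pd1_deriv[OF assms], of "{1<..}"])
       (use assms deriv_pres in auto)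
  then show ?thesis using DERIV_imp_deriv by blast
qed

lemma powr_bound: fixes d a :: real assumes "0 < d" "d < 1" "a \<le> -1" shows "1 / d \<le> d powr a"
proof -
  have "d powr (-1) \<le> d powr a" using powr_mono'[where a=a and b="-1::real" and x=d] assms by auto
  then show ?thesis using assms by (simp add: powr_minus divide_inverse)
qed

locale prs =
  fixes S g t1 t2 :: real and h :: "real \<Rightarrow> real"
  assumes g1: "1 < g" and S0: "0 < S" and t1: "1 < t1" and t12: "t1 < t2"
    and p1neg: "\<And>t. 1 < t \<Longrightarrow> pd1 S g t < 0"
    and p2pos: "\<And>t. 1 < t \<Longrightarrow> t < t1 \<Longrightarrow> pd2 S g t > 0"
    and p2neg: "\<And>t. t1 < t \<Longrightarrow> t < t2 \<Longrightarrow> pd2 S g t < 0"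
    and hd: "\<And>t. 1 < t \<Longrightarrow> (h has_real_derivative t * pd1 S g t) (at t)"
begin

abbreviation "P1 \<equiv> pd1 S g"
abbreviation "P2 \<equiv> pd2 S g"

definition Psi :: "real \<Rightarrow> real \<Rightarrow> real" where
  "Psi b f = h f - h b - P1 f * (f^2 - b^2) / 2"

lemma p1_cont: "1 < t \<Longrightarrow> isCont P1 t"
  using pd1_deriv DERIV_isCont by blast

lemma h_cont: "1 < t \<Longrightarrow> isCont h t"
  using hd DERIV_isCont by blast

lemma p1_cont_on: "1 < x \<Longrightarrow> continuous_on {x..y} P1"
  by (intro continuous_at_imp_continuous_on) (auto intro: p1_cont)

lemma p1_inc: assumes "1 < x" "x < y" "y \<le> t1" shows "P1 x < P1 y"
proof (rule DERIV_pos_imp_increasing_open[OF assms(2)])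
  fix z assume "x < z" "z < y"
  then show "\<exists>d. (P1 has_real_derivative d) (at z) \<and> d > 0"
    using assms pd1_deriv[of z S g] p2pos[of z] by auto
next
  show "continuous_on {x..y} P1" using p1_cont_on assms(1) by blast
qed

lemma p1_dec: assumes "t1 \<le> x" "x < y" "y \<le> t2" shows "P1 y < P1 x"
proof (rule DERIV_neg_imp_decreasing_open[OF assms(2)])
  fix z assume "x < z" "z < y"
  then show "\<exists>d. (P1 has_real_derivative d) (at z) \<and> d < 0"
    using assms pd1_deriv[of z S g] p2neg[of z] t1 by auto
next
  show "continuous_on {x..y} P1" using p1_cont_on assms(1) t1 by auto
qed

lemma Psi_deriv: assumes "1 < b"
  shows "((\<lambda>b. Psi b f) has_real_derivative b * (P1 f - P1 b)) (at b)"
  unfolding Psi_def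
  using assms by (auto intro!: derivative_eq_intros hd simp: algebra_simps)

lemma Psi_cont_on: "1 < x \<Longrightarrow> continuous_on {x..y} (\<lambda>b. Psi b f)"
  by (intro continuous_at_imp_continuous_on) (auto intro: DERIV_isCont[OF Psi_deriv])

lemma h_lower: assumes "1 < b" "b \<le> 2"
  shows "h 2 - S - 4 + S * (b - 1) powr (-g) \<le> h b"
proof -
  let ?k = "\<lambda>x. h x - S * (x - 1) powr (-g) - 2 * x"
  have "?k 2 \<le> ?k b"
  proof (rule DERIV_nonpos_imp_nonincreasing[OF assms(2)])
    fix x assume x: "b \<le> x" "x \<le> 2"
    then have x1: "1 < x" using assms by auto
    define c where "c = g * S * (x - 1) powr (-g - 1)"
    have c0: "c > 0" using g1 S0 x1 by (simp add: c_def)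
    have D: "(?k has_real_derivative x * P1 x - S * ((-g) * (x - 1) powr (-g - 1)) - 2) (at x)"
      using DERIV_diff[OF DERIV_diff[OF hd[OF x1] DERIV_cmult[OF powr_sh[OF x1, of "-g"], of S]] DERIV_cmult[OF DERIV_ident, of 2]]
      by simp
    have E: "x * P1 x - S * ((-g) * (x - 1) powr (-g - 1)) - 2 = - (x - 1) * c + 2 / x^2 - 2"
    proof -
      have q: "x * (2/x^3) = 2/x^2" using x1 by (simp add: power3_eq_cube power2_eq_square)
      have "\<And>E. x * (- g*S*E + 2/x^3) - S*((-g)*E) - 2 = -(x-1)*(g*S*E) + 2/x^2 - 2"
        using q by (simp add: algebra_simps)
      then show ?thesis unfolding pd1_def c_def .
    qed
    have N: "- (x - 1) * c + 2 / x^2 - 2 \<le> 0"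
    proof -
      have "2 / x^2 \<le> 2" using x1 by (simp add: field_simps)
      moreover have "(x - 1) * c \<ge> 0" using x1 c0 by (intro mult_nonneg_nonneg) auto
      ultimately show ?thesis by linarith
    qed
    show "\<exists>y. (?k has_real_derivative y) (at x) \<and> y \<le> 0"
      using D N unfolding E by blast
  qed
  moreover have "(2 - 1 :: real) powr (-g) = 1" by simp
  ultimately have "h 2 - S - 4 \<le> h b - S * (b - 1) powr (-g) - 2 * b" by simp
  then show ?thesis using assms by linarith
qed

lemma p1_upper: assumes "1 < t" "t < 2" shows "P1 t \<le> - g * S / (t - 1) + 2"
proof -
  define E where "E = (t - 1) powr (- g - 1)"
  define F where "F = 1 / (t - 1)"
  have "F \<le> E" using powr_bound[of "t-1" "-g-1"] assms g1 by (auto simp: E_def F_def)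
  then have a: "g * S * F \<le> g * S * E"
    using g1 S0 by (intro mult_left_mono) auto
  have b: "2 / t^3 \<le> 2" using assms by (simp add: field_simps)
  have c: "P1 t = -(g*S*E) + 2/t^3" by (simp add: pd1_def E_def)
  have d: "- g*S/(t-1) = -(g*S*F)" by (simp add: F_def)
  show ?thesis unfolding c d using a b by linarith
qed


lemma Psi_self: "Psi f f = 0" by (simp add: Psi_def)

lemma main: assumes f: "t1 < f" "f < t2"
  shows "\<exists>b0. 1 < b0 \<and> b0 < f \<and> Psi b0 f = 0 \<and> P1 b0 < P1 f \<and>
     (\<forall>b. 1 < b \<longrightarrow> b < f \<longrightarrow> Psi b f = 0 \<longrightarrow> b = b0) \<and>
     (\<forall>x. b0 < x \<longrightarrow> x < f \<longrightarrow> 0 < Psi x f) \<and>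
     (\<forall>b. 1 < b \<longrightarrow> b < b0 \<longrightarrow> Psi b f < 0)"
proof -
  have f1: "1 < f" using f t1 by simp
  have pf: "P1 f < 0" using p1neg f1 .
  define M where "M = - P1 f * f^2 / 2"
  define R where "R = h f - (h 2 - S - 4) + M"
  define d where "d = min (1/2) (min ((t1-1)/2) (min (S/(\<bar>R\<bar>+1)/2) (g*S/(2 - P1 f)/2)))"
  have q1: "0 < S/(\<bar>R\<bar>+1)" using S0 by (simp add: add_pos_nonneg)
  have q2: "0 < g*S/(2 - P1 f)" using S0 g1 pf by simp
  have "0 < S/(\<bar>R\<bar>+1)/2" "0 < g*S/(2 - P1 f)/2" "0 < (t1-1)/2" using q1 q2 t1 by (simp_all only: half_gt_zero_iff)
  then have d0: "0 < d" unfolding d_def by (simp only: min_less_iff_conj) simp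
  have d1: "d \<le> 1/2" unfolding d_def by (rule min.cobounded1)
  have d2': "d \<le> (t1-1)/2" unfolding d_def by (meson min.cobounded1 min.cobounded2 order_trans)
  have d3': "d \<le> S/(\<bar>R\<bar>+1)/2" unfolding d_def by (meson min.cobounded1 min.cobounded2 order_trans)
  have d4': "d \<le> g*S/(2 - P1 f)/2" unfolding d_def by (meson min.cobounded1 min.cobounded2 order_trans)
  have d2: "d < t1 - 1" by (rule le_less_trans[OF d2']) (use t1 in simp)
  have half: "\<And>x::real. 0 < x \<Longrightarrow> x/2 < x" by simp
  have d3: "d < S/(\<bar>R\<bar>+1)" by (rule le_less_trans[OF d3' half[OF q1]])
  have d4: "d < g*S/(2 - P1 f)" by (rule le_less_trans[OF d4' half[OF q2]])
  define bs where "bs = 1 + d"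
  have bs1: "1 < bs" "bs < t1" "bs < 2" "bs < f" using d0 d1 d2 f by (auto simp: bs_def)
  have pbs: "P1 bs < P1 f"
  proof -
    have "P1 bs \<le> - g * S / d + 2" using p1_upper[of bs] bs1 by (simp add: bs_def)
    moreover have "2 - P1 f < g * S / d"
      using d4 d0 pf by (simp add: field_simps)
    ultimately show ?thesis by (simp add: field_simps)
  qed
  have psbs: "Psi bs f < 0"
  proof -
    have hb: "h 2 - S - 4 + S * d powr (-g) \<le> h bs" using h_lower[of bs] bs1 by (simp add: bs_def)
    have "1 / d \<le> d powr (-g)" using powr_bound[of d "-g"] d0 d1 g1 by simp
    then have sd: "S / d \<le> S * d powr (-g)" using S0 by (metis mult_left_mono less_le times_divide_eq_right mult.right_neutral)
    have "\<bar>R\<bar> + 1 < S / d" using d3 d0 by (simp add: field_simps)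
    have mm: "- P1 f * (f^2 - bs^2) / 2 \<le> M"
    proof -
      have "- P1 f * (f^2 - bs^2) \<le> - P1 f * f^2" using pf by (intro mult_left_mono) auto
      then show ?thesis by (simp add: M_def)
    qed
    have "Psi bs f = h f - h bs + (- P1 f * (f^2 - bs^2) / 2)" by (simp add: Psi_def)
    then show ?thesis using hb sd mm \<open>\<bar>R\<bar> + 1 < S / d\<close> unfolding R_def by linarith
  qed
  have pt1: "P1 f < P1 t1" using p1_dec[of t1 f] f by simp
  obtain c where c: "bs \<le> c" "c \<le> t1" "P1 c = P1 f"
    using IVT'[of P1 bs "P1 f" t1] pbs pt1 bs1 p1_cont_on[of bs t1] by auto
  have c1: "bs < c" using c pbs by (auto simp: le_less)
  have c2: "c < t1" using c pt1 by (auto simp: le_less)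
  have inc: "Psi x f < Psi y f" if "1 < x" "x < y" "y \<le> c" for x y
  proof (rule DERIV_pos_imp_increasing_open[OF that(2)])
    fix z assume z: "x < z" "z < y"
    have "P1 z < P1 c" using p1_inc[of z c] z that c2 by simp
    then have "0 < z * (P1 f - P1 z)" using z that c by simp
    then show "\<exists>y. ((\<lambda>b. Psi b f) has_real_derivative y) (at z) \<and> 0 < y"
      using Psi_deriv[of z f] z that by auto
  next
    show "continuous_on {x..y} (\<lambda>b. Psi b f)" using Psi_cont_on that(1) by blast
  qed
  have dec: "Psi y f < Psi x f" if "c \<le> x" "x < y" "y \<le> f" for x y
  proof (rule DERIV_neg_imp_decreasing_open[OF that(2)])
    fix z assume z: "x < z" "z < y"
    have "P1 f < P1 z"
    proof (cases "z \<le> t1")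
      case True then show ?thesis using p1_inc[of c z] z that c c1 bs1 by simp
    next
      case False then show ?thesis using p1_dec[of z f] z that f by simp
    qed
    then have "z * (P1 f - P1 z) < 0" using z that c1 bs1 by (simp add: mult_pos_neg)
    then show "\<exists>y. ((\<lambda>b. Psi b f) has_real_derivative y) (at z) \<and> y < 0"
      using Psi_deriv[of z f] z that c1 bs1 by auto
  next
    show "continuous_on {x..y} (\<lambda>b. Psi b f)" using Psi_cont_on that c1 bs1 by simp
  qed
  have pos: "0 < Psi x f" if "c \<le> x" "x < f" for x
    using dec[of x f] that Psi_self[of f] by simp
  have cf: "c < f" using c2 f by simp
  have "0 < Psi c f" using pos cf by simp
  then obtain b0 where b0: "bs \<le> b0" "b0 \<le> c" "Psi b0 f = 0"
    using IVT'[of "\<lambda>b. Psi b f" bs 0 c] psbs c1 Psi_cont_on[of bs c f] bs1 by auto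
  have b01: "bs < b0" using b0 psbs by (auto simp: le_less)
  have b02: "b0 < c" using b0 \<open>0 < Psi c f\<close> by (auto simp: le_less)
  have pb0: "P1 b0 < P1 f" using p1_inc[of b0 c] b01 b02 bs1 c c2 by simp
  show ?thesis
  proof (intro exI[of _ b0] conjI allI impI)
    show "1 < b0" "b0 < f" "Psi b0 f = 0" "P1 b0 < P1 f" using b01 b02 bs1 cf b0 pb0 by auto
  next
    fix b assume b: "1 < b" "b < f" "Psi b f = 0"
    show "b = b0"
    proof (rule ccontr)
      assume ne: "b \<noteq> b0"
      show False
      proof (cases "c \<le> b")
        case True then show False using pos[of b] b by simp
      next
        case False
        show False
        proof (cases "b < b0")
          case True then show False using inc[of b b0] b b0 b02 by simp
        next
          case False2: False
          then have "b0 < b" using ne by simp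
          then show False using inc[of b0 b] b b0 b01 bs1 False by simp
        qed
      qed
    qed
  next
    fix x assume x: "b0 < x" "x < f"
    show "0 < Psi x f"
    proof (cases "x \<le> c")
      case True then show ?thesis using inc[of b0 x] x b0 b01 bs1 by simp
    next
      case False then show ?thesis using pos[of x] x by simp
    qed
  next
    fix b assume b: "1 < b" "b < b0"
    then show "Psi b f < 0" using inc[of b b0] b0 b02 by simp
  qed
qed


lemma chord_eq: assumes "0 < b" "b < f"
  shows "chord h b f = chord h f b" "chord h f b = P1 f + 2 * Psi b f / (f^2 - b^2)"
proof -
  have "b^2 < f^2" using assms by (intro power_strict_mono) auto
  then have ne: "f^2 - b^2 \<noteq> 0" by simp
  show "chord h b f = chord h f b" unfolding chord_def
    by (metis minus_diff_eq minus_divide_divide)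
  have gen: "\<And>A B D::real. D \<noteq> 0 \<Longrightarrow> A / D = B + (A - B * D) / D"
    by (simp add: diff_divide_distrib)
  have "2 * Psi b f = (2 * h f - 2 * h b) - P1 f * (f^2 - b^2)" by (simp add: Psi_def)
  then show "chord h f b = P1 f + 2 * Psi b f / (f^2 - b^2)" unfolding chord_def
    using gen[OF ne, of "2 * h f - 2 * h b" "P1 f"] by simp
qed

lemma prcond_iff: assumes f: "t1 < f" "f < t2" and b: "1 < b" "b < f"
  shows "pr_cond (pres S g) h f b \<longleftrightarrow> Psi b f = 0"
proof -
  have f1: "1 < f" using f t1 by simp
  have "b^2 < f^2" using b by (intro power_strict_mono) auto
  then have ne: "f^2 - b^2 > 0" by simp
  have ce: "chord h b f = P1 f + 2 * Psi b f / (f^2 - b^2)" using chord_eq b by simp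
  have dp: "deriv (pres S g) b = P1 b" "deriv (pres S g) f = P1 f" using deriv_pres b f1 by auto
  show ?thesis
  proof
    assume "pr_cond (pres S g) h f b"
    then have "chord h b f = P1 f" unfolding pr_cond_def dp by simp
    then show "Psi b f = 0" using ce ne by simp
  next
    assume z: "Psi b f = 0"
    obtain b0 where b0: "1 < b0" "b0 < f" "Psi b0 f = 0" "P1 b0 < P1 f"
      "\<forall>b. 1 < b \<longrightarrow> b < f \<longrightarrow> Psi b f = 0 \<longrightarrow> b = b0"
      "\<forall>x. b0 < x \<longrightarrow> x < f \<longrightarrow> 0 < Psi x f"
      using main[OF f] by blast
    have bb: "b = b0" using b0(5) b z by blast
    have c1: "chord h b f = P1 f" using ce z by simp
    have c2: "chord h f b < chord h f x" if x: "b < x" "x < f" for x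
    proof -
      have "0 < Psi x f" using b0(6) x bb by simp
      moreover have "x^2 < f^2" using x b by (intro power_strict_mono) auto
      ultimately have "0 < 2 * Psi x f / (f^2 - x^2)" by simp
      then show ?thesis using chord_eq[of x f] chord_eq[of b f] x b z c1 by simp
    qed
    show "pr_cond (pres S g) h f b" unfolding pr_cond_def dp
      using c1 c2 b0(4) bb by auto
  qed
qed

definition bf :: "real \<Rightarrow> real" where
  "bf f = (THE b. b \<in> {1<..<f} \<and> pr_cond (pres S g) h f b)"

lemma bf_props: assumes f: "t1 < f" "f < t2"
  shows "\<exists>!b. b \<in> {1<..<f} \<and> pr_cond (pres S g) h f b"
    "1 < bf f" "bf f < f" "Psi (bf f) f = 0" "P1 (bf f) < P1 f"
    "\<forall>b. 1 < b \<longrightarrow> b < f \<longrightarrow> Psi b f = 0 \<longrightarrow> b = bf f"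
    "\<forall>x. bf f < x \<longrightarrow> x < f \<longrightarrow> 0 < Psi x f"
    "\<forall>b. 1 < b \<longrightarrow> b < bf f \<longrightarrow> Psi b f < 0"
proof -
  obtain b0 where b0: "1 < b0" "b0 < f" "Psi b0 f = 0" "P1 b0 < P1 f"
      "\<forall>b. 1 < b \<longrightarrow> b < f \<longrightarrow> Psi b f = 0 \<longrightarrow> b = b0"
      "\<forall>x. b0 < x \<longrightarrow> x < f \<longrightarrow> 0 < Psi x f"
      "\<forall>b. 1 < b \<longrightarrow> b < b0 \<longrightarrow> Psi b f < 0"
      using main[OF f] by blast
  have iff: "b \<in> {1<..<f} \<and> pr_cond (pres S g) h f b \<longleftrightarrow> b = b0" for b
  proof
    assume "b \<in> {1<..<f} \<and> pr_cond (pres S g) h f b"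
    then have "1 < b" "b < f" "Psi b f = 0" using prcond_iff[OF f, of b] by auto
    then show "b = b0" using b0(5) by blast
  next
    assume "b = b0"
    then show "b \<in> {1<..<f} \<and> pr_cond (pres S g) h f b" using prcond_iff[OF f, of b] b0(1,2,3) by simp
  qed
  show "\<exists>!b. b \<in> {1<..<f} \<and> pr_cond (pres S g) h f b" 
    by (rule ex1I[of _ b0]) (use iff in simp)+
  have bfe: "bf f = b0" unfolding bf_def iff by simp
  show "1 < bf f" unfolding bfe by (rule b0(1))
  show "bf f < f" unfolding bfe by (rule b0(2))
  show "Psi (bf f) f = 0" unfolding bfe by (rule b0(3))
  show "P1 (bf f) < P1 f" unfolding bfe by (rule b0(4))
  show "\<forall>b. 1 < b \<longrightarrow> b < f \<longrightarrow> Psi b f = 0 \<longrightarrow> b = bf f" unfolding bfe by (rule b0(5))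
  show "\<forall>x. bf f < x \<longrightarrow> x < f \<longrightarrow> 0 < Psi x f" unfolding bfe by (rule b0(6))
  show "\<forall>b. 1 < b \<longrightarrow> b < bf f \<longrightarrow> Psi b f < 0" unfolding bfe by (rule b0(7))
qed


lemma Psi_cont_f: "1 < f0 \<Longrightarrow> isCont (\<lambda>f. Psi b f) f0"
  unfolding Psi_def by (intro continuous_intros h_cont p1_cont) auto

lemma bf_cont: assumes f0: "t1 < f0" "f0 < t2" shows "isCont bf f0"
proof -
  define b0 where "b0 = bf f0"
  have b0: "1 < b0" "b0 < f0" "\<forall>x. b0 < x \<longrightarrow> x < f0 \<longrightarrow> 0 < Psi x f0"
    "\<forall>b. 1 < b \<longrightarrow> b < b0 \<longrightarrow> Psi b f0 < 0"
    using bf_props[OF f0] unfolding b0_def by blast+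
  have f01: "1 < f0" using f0 t1 by simp
  show ?thesis unfolding isCont_def tendsto_iff
  proof (intro allI impI)
    fix e :: real assume e: "0 < e"
    define e' where "e' = min e (min ((b0-1)/2) ((f0-b0)/2))"
    have e'1: "e' \<le> e" unfolding e'_def by (rule min.cobounded1)
    have e'2: "e' \<le> (b0-1)/2" unfolding e'_def by (meson min.cobounded1 min.cobounded2 order_trans)
    have e'3: "e' \<le> (f0-b0)/2" unfolding e'_def by (meson min.cobounded1 min.cobounded2 order_trans)
    have e'0: "0 < e'" unfolding e'_def using e b0 by simp
    have l1: "1 < b0 - e'" using e'2 e'0 b0(1) by simp
    have l2: "b0 + e' < f0" using e'3 e'0 b0(2) by simp
    have A: "Psi (b0 - e') f0 < 0" using b0(4) l1 e'0 by simp
    have B: "0 < Psi (b0 + e') f0" using b0(3) l2 e'0 by simp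
    have evA: "eventually (\<lambda>f. Psi (b0 - e') f < 0) (at f0)"
      using order_tendstoD(2)[OF Psi_cont_f[OF f01, of "b0 - e'", unfolded isCont_def] A] .
    have evB: "eventually (\<lambda>f. 0 < Psi (b0 + e') f) (at f0)"
      using order_tendstoD(1)[OF Psi_cont_f[OF f01, of "b0 + e'", unfolded isCont_def] B] .
    have ev1: "eventually (\<lambda>f. t1 < f) (at f0)"
      using order_tendstoD(1)[OF tendsto_ident_at f0(1)] .
    have ev2: "eventually (\<lambda>f. f < t2) (at f0)"
      using order_tendstoD(2)[OF tendsto_ident_at f0(2)] .
    have ev3: "eventually (\<lambda>f. b0 + e' < f) (at f0)"
      using order_tendstoD(1)[OF tendsto_ident_at l2] .
    show "eventually (\<lambda>f. dist (bf f) (bf f0) < e) (at f0)"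
    proof (rule eventually_mono[OF eventually_conj[OF evA eventually_conj[OF evB eventually_conj[OF ev1 eventually_conj[OF ev2 ev3]]]]])
      fix f assume H: "Psi (b0 - e') f < 0 \<and> 0 < Psi (b0 + e') f \<and> t1 < f \<and> f < t2 \<and> b0 + e' < f"
      then have fr: "t1 < f" "f < t2" by auto
      obtain x where x: "b0 - e' \<le> x" "x \<le> b0 + e'" "Psi x f = 0"
        using IVT'[of "\<lambda>b. Psi b f" "b0 - e'" 0 "b0 + e'"] H e'0 Psi_cont_on[OF l1, of "b0 + e'" f] by auto
      have x1: "b0 - e' < x" using x H by (auto simp: le_less)
      have x2: "x < b0 + e'" using x H by (auto simp: le_less)
      have "x = bf f" using bf_props(6)[OF fr] x l1 x1 x2 H by auto
      then show "dist (bf f) (bf f0) < e" using x1 x2 e'1 unfolding dist_real_def b0_def[symmetric] by simp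
    qed
  qed
qed


lemma Psi_deriv_f: assumes "1 < f0"
  shows "((\<lambda>f. Psi b f) has_real_derivative (- P2 f0 * (f0^2 - b^2) / 2)) (at f0)"
proof -
  have "((\<lambda>f. Psi b f) has_real_derivative
          f0 * P1 f0 - 0 - (P2 f0 * (f0^2 - b^2) + P1 f0 * (2 * f0 - 0)) / 2) (at f0)"
    unfolding Psi_def
    using assms by (auto intro!: derivative_eq_intros hd pd1_deriv)
  moreover have "f0 * P1 f0 - 0 - (P2 f0 * (f0^2 - b^2) + P1 f0 * (2 * f0 - 0)) / 2
      = - P2 f0 * (f0^2 - b^2) / 2" by (simp add: field_simps)
  ultimately show ?thesis by simp
qed


lemma bf_deriv: assumes f0: "t1 < f0" "f0 < t2"
  shows "\<exists>D. (bf has_real_derivative D) (at f0) \<and> D < 0"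
proof -
  define b0 where "b0 = bf f0"
  have b0: "1 < b0" "b0 < f0" "P1 b0 < P1 f0"
    using bf_props[OF f0] unfolding b0_def by blast+
  have f01: "1 < f0" using f0 t1 by simp
  obtain gh where gh: "\<forall>z. h z - h b0 = gh z * (z - b0)" "isCont gh b0" "gh b0 = b0 * P1 b0"
    using hd[OF b0(1)] CARAT_DERIV by blast
  obtain ga where ga: "\<forall>z. Psi b0 z - Psi b0 f0 = ga z * (z - f0)" "isCont ga f0"
      "ga f0 = - P2 f0 * (f0^2 - b0^2) / 2"
    using Psi_deriv_f[OF f01, of b0] CARAT_DERIV by blast
  have Ps0: "Psi b0 f0 = 0" using bf_props(4)[OF f0] unfolding b0_def .
  define Q where "Q f = - gh (bf f) + P1 f * (bf f + b0) / 2" for f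
  have Qeq: "Psi (bf f) f - Psi b0 f = Q f * (bf f - b0)" for f
  proof -
    have "h (bf f) - h b0 = gh (bf f) * (bf f - b0)" using gh(1) by blast
    then have hb: "h (bf f) = h b0 + gh (bf f) * (bf f - b0)" by simp
    show ?thesis unfolding Psi_def Q_def hb by (simp add: field_simps power2_eq_square)
  qed
  have bc: "isCont bf f0" by (rule bf_cont[OF f0])
  have ghc: "isCont (\<lambda>f. gh (bf f)) f0"
    by (rule isCont_o2[OF bc]) (use gh(2) in \<open>simp add: b0_def\<close>)
  have Qc: "isCont Q f0" unfolding Q_def[abs_def]
    by (intro continuous_intros ghc bc p1_cont f01) auto
  have Q0: "Q f0 = b0 * (P1 f0 - P1 b0)" unfolding Q_def using gh(3)
    by (simp add: b0_def[symmetric] algebra_simps)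
  have Q0p: "0 < Q f0" unfolding Q0 using b0 by simp
  have ga0: "0 < ga f0"
  proof -
    have "b0^2 < f0^2" using b0 by (intro power_strict_mono) auto
    then have "0 < f0^2 - b0^2" by simp
    moreover have "P2 f0 < 0" using p2neg f0 by simp
    ultimately have "P2 f0 * (f0^2 - b0^2) < 0" by (intro mult_neg_pos)
    then have "0 < - P2 f0 * (f0^2 - b0^2)" by simp
    then show ?thesis unfolding ga(3) by simp
  qed
  have lim: "((\<lambda>f. - ga f / Q f) \<longlongrightarrow> - ga f0 / Q f0) (at f0)"
  proof -
    have "isCont (\<lambda>f. - ga f / Q f) f0" using ga(2) Qc Q0p by (intro continuous_intros) auto
    then show ?thesis unfolding isCont_def .
  qed
  have evQ: "eventually (\<lambda>f. 0 < Q f) (at f0)"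
    using order_tendstoD(1)[OF Qc[unfolded isCont_def] Q0p] .
  have ev1: "eventually (\<lambda>f. t1 < f) (at f0)"
    using order_tendstoD(1)[OF tendsto_ident_at f0(1)] .
  have ev2: "eventually (\<lambda>f. f < t2) (at f0)"
    using order_tendstoD(2)[OF tendsto_ident_at f0(2)] .
  have ev3: "eventually (\<lambda>f. f \<noteq> f0) (at f0)" by (simp add: eventually_at_filter)
  have ev: "eventually (\<lambda>f. - ga f / Q f = (bf f - bf f0) / (f - f0)) (at f0)"
  proof (rule eventually_mono[OF eventually_conj[OF evQ eventually_conj[OF ev1 eventually_conj[OF ev2 ev3]]]])
    fix f assume H: "0 < Q f \<and> t1 < f \<and> f < t2 \<and> f \<noteq> f0"
    then have fr: "t1 < f" "f < t2" by auto
    have "Psi (bf f) f = 0" using bf_props(4)[OF fr] .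
    then have "0 = Q f * (bf f - b0) + ga f * (f - f0)"
      using Qeq[of f] ga(1) Ps0 by (metis add_diff_cancel_right' diff_add_cancel diff_zero)
    then have e: "(bf f - b0) * Q f = - ga f * (f - f0)" by (simp add: algebra_simps)
    have "Q f \<noteq> 0" "f - f0 \<noteq> 0" using H by auto
    then show "- ga f / Q f = (bf f - bf f0) / (f - f0)"
      using e unfolding b0_def[symmetric] by (simp add: field_simps)
  qed
  have "((\<lambda>f. (bf f - bf f0) / (f - f0)) \<longlongrightarrow> - ga f0 / Q f0) (at f0)"
    by (rule Lim_transform_eventually[OF lim ev])
  then have "(bf has_real_derivative - ga f0 / Q f0) (at f0)"
    by (simp add: has_field_derivative_iff)
  moreover have "- ga f0 / Q f0 < 0" using ga0 Q0p by simp
  ultimately show ?thesis by blast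
qed

end

theorem proposition3p5:
  fixes S \<gamma> \<tau>1 \<tau>2 :: real and h :: "real \<Rightarrow> real"
  assumes "1 < \<gamma>" "\<gamma> < 2" "0 < S"
    and "1 < \<tau>1" "\<tau>1 < \<tau>2"
    and "\<forall>\<tau>>1. deriv (pres S \<gamma>) \<tau> < 0"
    and "\<forall>\<tau>\<in>{1<..<\<tau>1} \<union> {\<tau>2<..}. deriv (deriv (pres S \<gamma>)) \<tau> > 0"
    and "\<forall>\<tau>\<in>{\<tau>1<..<\<tau>2}. deriv (deriv (pres S \<gamma>)) \<tau> < 0"
    and "\<forall>\<tau>>1. (h has_real_derivative \<tau> * deriv (pres S \<gamma>) \<tau>) (at \<tau>)"
  shows "(\<forall>\<tau>f\<in>{\<tau>1<..<\<tau>2}. \<exists>!\<tau>b. \<tau>b \<in> {1<..<\<tau>f} \<and> pr_cond (pres S \<gamma>) h \<tau>f \<tau>b)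
    \<and> (let \<tau>pr = (\<lambda>\<tau>f. THE \<tau>b. \<tau>b \<in> {1<..<\<tau>f} \<and> pr_cond (pres S \<gamma>) h \<tau>f \<tau>b)
       in \<forall>\<tau>f\<in>{\<tau>1<..<\<tau>2}. \<exists>D. (\<tau>pr has_real_derivative D) (at \<tau>f) \<and> D < 0)"
proof -
  interpret P: prs S \<gamma> \<tau>1 \<tau>2 h
  proof
    show "1 < \<gamma>" "0 < S" "1 < \<tau>1" "\<tau>1 < \<tau>2" using assms by auto
  next
    fix t :: real assume "1 < t"
    then show "pd1 S \<gamma> t < 0" using assms(6) deriv_pres by metis
  next
    fix t :: real assume t: "1 < t" "t < \<tau>1"
    then have "deriv (deriv (pres S \<gamma>)) t > 0" using assms(7) by auto
    then show "pd2 S \<gamma> t > 0" using deriv2_pres t by metis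
  next
    fix t :: real assume t: "\<tau>1 < t" "t < \<tau>2"
    then have "deriv (deriv (pres S \<gamma>)) t < 0" using assms(8) by auto
    moreover have "1 < t" using t assms(4) by simp
    ultimately show "pd2 S \<gamma> t < 0" using deriv2_pres by metis
  next
    fix t :: real assume t: "1 < t"
    then show "(h has_real_derivative t * pd1 S \<gamma> t) (at t)" using assms(9) deriv_pres by metis
  qed
  have bfeq: "(\<lambda>\<tau>f. THE \<tau>b. \<tau>b \<in> {1<..<\<tau>f} \<and> pr_cond (pres S \<gamma>) h \<tau>f \<tau>b) = P.bf"
    by (rule ext) (simp add: P.bf_def)
  show ?thesis
    unfolding Let_def bfeq
    using P.bf_props(1) P.bf_deriv by auto
qed

end
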